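(* Let $h>0$ and let $\Sigma=X(\mathbb R^2)$ be a helicoidal surface of pitch $h$ in $\mathbb H^2\times\mathbb R$, oriented by the unit normal $\eta$. Then $\Sigma$ is a rotator to MCF if and only if $\Sigma$ is a translator to MCF with respect to the Killing field $-h\partial_t$, i.e. if and only if $H=\langle -h\partial_t,\eta\rangle$ on $\Sigma$, where $\partial_t$ is the gradient of the height function $(p,t)\mapsto t$ of $\mathbb H^2\times\mathbb R$.
   Context: Let $\mathbb L^3=(\mathbb R^3,\langle\cdot,\cdot\rangle)$ with $\langle\cdot,\cdot\rangle=dx_1^2+dx_2^2-dx_3^2$, and let $\mathbb H^2=\{p\in\mathbb L^3:\langle p,p\rangle=-1,\ x_3(p)>0\}$ (hyperboloid model) with the induced metric. The space $\mathbb H^2\times\mathbb R\subset\mathbb L^3\times\mathbb R$ carries the product metric $\langle\cdot,\cdot\rangle_{\mathbb H^2}+dt^2$. Identify $\mathbb R^2$ with $\{x_3=0\}\subset\mathbb L^3$ and let $J(x_1,x_2)=(-x_2,x_1)$; $e^{vJ}$ is the Euclidean rotation of $\mathbb R^2$ by angle $v$. For a regular curve $\alpha:\mathbb R\to\mathbb R^2$ parametrized by Euclidean arc length, set $T=\alpha'$, $N=JT$, $\tau=\langle\alpha,T\rangle$, $\mu=\langle\alpha,N\rangle$ (Euclidean inner products), and $\phi=\sqrt{1+|\alpha|^2}$, so that $\sigma=(\alpha,\phi)$ is a curve in $\mathbb H^2$. For $h>0$, the helicoidal surface of pitch $h$ generated by $\sigma$ is $\Sigma=X(\mathbb R^2)$,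 $X(u,v)=(e^{vJ}\alpha(u),\phi(u),hv)$. It is oriented by the unit normal $\eta=\rho\,(e^{vJ}(aT+bN),\ \mu,\ c)$ (components: the $\mathbb R^2$-part, the $x_3$-part, and the $\mathbb R$-factor part in $\mathbb L^3\times\mathbb R$), where, evaluated at $u$, $a=\mu\phi'$, $b=(1+\mu^2)/\phi$, $c=-\phi'/h$ and $\rho=(a^2+b^2-\mu^2+c^2)^{-1/2}$. The mean curvature $H$ is taken with respect to $\eta$ (half the trace of the second fundamental form $\langle\bar\nabla_{\cdot}\cdot,\eta\rangle$). Let $\xi(x_1,x_2,x_3,t)=(-x_2,x_1,0,0)$ be the Killing field generated by the rotations $\mathrm{diag}(e^{tJ},1,1)$ about the axis $\{(0,0,1)\}\times\mathbb R$. The surface is a rotator to MCF if $H=\langle\xi,\eta\rangle$ everywhere on it. *)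

theory Defs
  imports "HOL-Analysis.Analysis"
begin

text \<open>Points of L^3 x R are 4-tuples (x1, x2, x3, t); the first three coordinates
  live in Minkowski space L^3, the last one in the R factor.\<close>

type_synonym pt = "real \<times> real \<times> real \<times> real"

definition lprod :: "pt \<Rightarrow> pt \<Rightarrow> real" where
  "lprod p q = (case p of (x1, x2, x3, t) \<Rightarrow> case q of (y1, y2, y3, s) \<Rightarrow>
      x1 * y1 + x2 * y2 - x3 * y3 + t * s)"

definition Jrot :: "real \<times> real \<Rightarrow> real \<times> real" where
  "Jrot x = (- snd x, fst x)"

definition erot :: "real \<Rightarrow> real \<times> real \<Rightarrow> real \<times> real" where
  "erot v x = (cos v * fst x - sin v * snd x, sin v * fst x + cos v * snd x)"

definition Tc :: "(real \<Rightarrow> real \<times> real) \<Rightarrow> real \<Rightarrow> real \<times> real" where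
  "Tc \<alpha> u = vector_derivative \<alpha> (at u)"

definition Nc :: "(real \<Rightarrow> real \<times> real) \<Rightarrow> real \<Rightarrow> real \<times> real" where
  "Nc \<alpha> u = Jrot (Tc \<alpha> u)"

definition tauc :: "(real \<Rightarrow> real \<times> real) \<Rightarrow> real \<Rightarrow> real" where
  "tauc \<alpha> u = \<alpha> u \<bullet> Tc \<alpha> u"

definition muc :: "(real \<Rightarrow> real \<times> real) \<Rightarrow> real \<Rightarrow> real" where
  "muc \<alpha> u = \<alpha> u \<bullet> Nc \<alpha> u"

definition phic :: "(real \<Rightarrow> real \<times> real) \<Rightarrow> real \<Rightarrow> real" where
  "phic \<alpha> u = sqrt (1 + (norm (\<alpha> u))\<^sup>2)"

definition Xhel :: "(real \<Rightarrow> real \<times> real) \<Rightarrow> real \<Rightarrow> real \<Rightarrow> real \<Rightarrow> pt" where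
  "Xhel \<alpha> h u v = (let p = erot v (\<alpha> u) in (fst p, snd p, phic \<alpha> u, h * v))"

definition ac :: "(real \<Rightarrow> real \<times> real) \<Rightarrow> real \<Rightarrow> real" where
  "ac \<alpha> u = muc \<alpha> u * deriv (phic \<alpha>) u"

definition bc :: "(real \<Rightarrow> real \<times> real) \<Rightarrow> real \<Rightarrow> real" where
  "bc \<alpha> u = (1 + (muc \<alpha> u)\<^sup>2) / phic \<alpha> u"

definition cc :: "(real \<Rightarrow> real \<times> real) \<Rightarrow> real \<Rightarrow> real \<Rightarrow> real" where
  "cc \<alpha> h u = - deriv (phic \<alpha>) u / h"

definition rhoc :: "(real \<Rightarrow> real \<times> real) \<Rightarrow> real \<Rightarrow> real \<Rightarrow> real" where
  "rhoc \<alpha> h u = 1 / sqrt ((ac \<alpha> u)\<^sup>2 + (bc \<alpha> u)\<^sup>2 - (muc \<alpha> u)\<^sup>2 + (cc \<alpha> h u)\<^sup>2)"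

definition etahel :: "(real \<Rightarrow> real \<times> real) \<Rightarrow> real \<Rightarrow> real \<Rightarrow> real \<Rightarrow> pt" where
  "etahel \<alpha> h u v =
     (let w = erot v (ac \<alpha> u *\<^sub>R Tc \<alpha> u + bc \<alpha> u *\<^sub>R Nc \<alpha> u); r = rhoc \<alpha> h u
      in (r * fst w, r * snd w, r * muc \<alpha> u, r * cc \<alpha> h u))"

definition Xu :: "(real \<Rightarrow> real \<times> real) \<Rightarrow> real \<Rightarrow> real \<Rightarrow> real \<Rightarrow> pt" where
  "Xu \<alpha> h u v = vector_derivative (\<lambda>s. Xhel \<alpha> h s v) (at u)"

definition Xv :: "(real \<Rightarrow> real \<times> real) \<Rightarrow> real \<Rightarrow> real \<Rightarrow> real \<Rightarrow> pt" where
  "Xv \<alpha> h u v = vector_derivative (\<lambda>s. Xhel \<alpha> h u s) (at v)"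

definition Xuu :: "(real \<Rightarrow> real \<times> real) \<Rightarrow> real \<Rightarrow> real \<Rightarrow> real \<Rightarrow> pt" where
  "Xuu \<alpha> h u v = vector_derivative (\<lambda>s. Xu \<alpha> h s v) (at u)"

definition Xuv :: "(real \<Rightarrow> real \<times> real) \<Rightarrow> real \<Rightarrow> real \<Rightarrow> real \<Rightarrow> pt" where
  "Xuv \<alpha> h u v = vector_derivative (\<lambda>s. Xv \<alpha> h s v) (at u)"

definition Xvv :: "(real \<Rightarrow> real \<times> real) \<Rightarrow> real \<Rightarrow> real \<Rightarrow> real \<Rightarrow> pt" where
  "Xvv \<alpha> h u v = vector_derivative (\<lambda>s. Xv \<alpha> h u s) (at v)"

text \<open>Levi-Civita connection of H^2 x R (Gauss formula): the ambient flat derivative in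
  L^3 x R projected tangentially to H^2 x R at the point p = (p1,p2,p3,t), i.e.
  w + <w_L, p_L> (p_L, 0), using <p_L,p_L> = -1.\<close>
definition tproj :: "pt \<Rightarrow> pt \<Rightarrow> pt" where
  "tproj p w = (case p of (p1, p2, p3, t) \<Rightarrow> case w of (w1, w2, w3, w4) \<Rightarrow>
      (let k = w1 * p1 + w2 * p2 - w3 * p3 in (w1 + k * p1, w2 + k * p2, w3 + k * p3, w4)))"

definition mean_curv :: "(real \<Rightarrow> real \<times> real) \<Rightarrow> real \<Rightarrow> real \<Rightarrow> real \<Rightarrow> real" where
  "mean_curv \<alpha> h u v =
    (let p = Xhel \<alpha> h u v; \<eta> = etahel \<alpha> h u v;
         E = lprod (Xu \<alpha> h u v) (Xu \<alpha> h u v);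
         F = lprod (Xu \<alpha> h u v) (Xv \<alpha> h u v);
         G = lprod (Xv \<alpha> h u v) (Xv \<alpha> h u v);
         l = lprod (tproj p (Xuu \<alpha> h u v)) \<eta>;
         m = lprod (tproj p (Xuv \<alpha> h u v)) \<eta>;
         n = lprod (tproj p (Xvv \<alpha> h u v)) \<eta>
     in (G * l - 2 * F * m + E * n) / (2 * (E * G - F\<^sup>2)))"

definition xi_rot :: "pt \<Rightarrow> pt" where
  "xi_rot p = (case p of (x1, x2, x3, t) \<Rightarrow> (- x2, x1, 0, 0))"

definition dt_field :: pt where
  "dt_field = (0, 0, 0, 1)"

definition is_rotator :: "(real \<Rightarrow> real \<times> real) \<Rightarrow> real \<Rightarrow> bool" where
  "is_rotator \<alpha> h \<longleftrightarrow>
     (\<forall>u v. mean_curv \<alpha> h u v = lprod (xi_rot (Xhel \<alpha> h u v)) (etahel \<alpha> h u v))"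

definition is_translator :: "(real \<Rightarrow> real \<times> real) \<Rightarrow> real \<Rightarrow> pt \<Rightarrow> bool" where
  "is_translator \<alpha> h Y \<longleftrightarrow> (\<forall>u v. mean_curv \<alpha> h u v = lprod Y (etahel \<alpha> h u v))"

definition smooth_curve :: "(real \<Rightarrow> real \<times> real) \<Rightarrow> bool" where
  "smooth_curve \<alpha> \<longleftrightarrow> (\<exists>D :: nat \<Rightarrow> real \<Rightarrow> real \<times> real. D 0 = \<alpha> \<and>
      (\<forall>n u. (D n has_vector_derivative D (Suc n) u) (at u)))"

definition arclength_param :: "(real \<Rightarrow> real \<times> real) \<Rightarrow> bool" where
  "arclength_param \<alpha> \<longleftrightarrow> (\<forall>u. norm (vector_derivative \<alpha> (at u)) = 1)"

end

theory Submission
  imports Defs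
begin

lemma deriv_phic:
  assumes d: "(\<alpha> has_vector_derivative T) (at u)"
  shows "deriv (phic \<alpha>) u = (\<alpha> u \<bullet> T) / phic \<alpha> u"
proof -
  have pos: "0 < 1 + \<alpha> u \<bullet> \<alpha> u"
    by (metis add_pos_nonneg inner_ge_zero zero_less_one)
  have fe: "phic \<alpha> = (\<lambda>s. sqrt (1 + \<alpha> s \<bullet> \<alpha> s))"
    by (rule ext) (simp add: phic_def power2_norm_eq_inner)
  have di: "((\<lambda>s. 1 + \<alpha> s \<bullet> \<alpha> s) has_real_derivative (\<alpha> u \<bullet> T + T \<bullet> \<alpha> u)) (at u)"
  proof -
    have "((\<lambda>s. \<alpha> s \<bullet> \<alpha> s) has_derivative (\<lambda>x. \<alpha> u \<bullet> (x *\<^sub>R T) + (x *\<^sub>R T) \<bullet> \<alpha> u)) (at u)"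
      using has_derivative_inner[OF d[unfolded has_vector_derivative_def] d[unfolded has_vector_derivative_def]] .
    then have "((\<lambda>s. 1 + \<alpha> s \<bullet> \<alpha> s) has_derivative (\<lambda>x. \<alpha> u \<bullet> (x *\<^sub>R T) + (x *\<^sub>R T) \<bullet> \<alpha> u)) (at u)"
      using has_derivative_add[OF has_derivative_const[of 1]] by simp
    moreover have "(\<lambda>x. \<alpha> u \<bullet> (x *\<^sub>R T) + (x *\<^sub>R T) \<bullet> \<alpha> u) = (\<lambda>x. (\<alpha> u \<bullet> T + T \<bullet> \<alpha> u) * x)"
      by (auto simp: algebra_simps)
    ultimately show ?thesis by (simp add: has_field_derivative_def)
  qed
  have "((\<lambda>s. sqrt (1 + \<alpha> s \<bullet> \<alpha> s)) has_real_derivative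
          (inverse (sqrt (1 + \<alpha> u \<bullet> \<alpha> u)) / 2 * (\<alpha> u \<bullet> T + T \<bullet> \<alpha> u))) (at u)"
    using DERIV_chain2[OF DERIV_real_sqrt[OF pos] di] by simp
  then have "deriv (phic \<alpha>) u = inverse (sqrt (1 + \<alpha> u \<bullet> \<alpha> u)) / 2 * (\<alpha> u \<bullet> T + T \<bullet> \<alpha> u)"
    unfolding fe by (rule DERIV_imp_deriv)
  also have "\<dots> = (\<alpha> u \<bullet> T) / phic \<alpha> u"
    by (simp add: fe inner_commute field_simps)
  finally show ?thesis .
qed

theorem theorem1p2:
  fixes \<alpha> :: "real \<Rightarrow> real \<times> real" and h :: real
  assumes "h > 0"
    and "smooth_curve \<alpha>"
    and "arclength_param \<alpha>"
  shows "is_rotator \<alpha> h \<longleftrightarrow> is_translator \<alpha> h ((- h) *\<^sub>R dt_field)"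
proof -
  obtain D where D0: "D 0 = \<alpha>" and DD: "\<And>n u. (D n has_vector_derivative D (Suc n) u) (at u)"
    using assms(2) unfolding smooth_curve_def by blast
  have key: "lprod (xi_rot (Xhel \<alpha> h u v)) (etahel \<alpha> h u v)
           = lprod ((- h) *\<^sub>R dt_field) (etahel \<alpha> h u v)" for u v
  proof -
    have d: "(\<alpha> has_vector_derivative Tc \<alpha> u) (at u)"
      using DD[of 0 u] D0 unfolding Tc_def by (metis vector_derivative_at)
    have pp: "phic \<alpha> u > 0" unfolding phic_def
      by (simp add: add_pos_nonneg)
    have dp: "deriv (phic \<alpha>) u = tauc \<alpha> u / phic \<alpha> u"
      using deriv_phic[OF d] by (simp add: tauc_def)
    obtain a1 a2 where A: "\<alpha> u = (a1, a2)" by fastforce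
    obtain t1 t2 where T: "Tc \<alpha> u = (t1, t2)" by fastforce
    have mu: "muc \<alpha> u = a2 * t1 - a1 * t2"
      by (simp add: muc_def Nc_def Jrot_def A T)
    have ta: "tauc \<alpha> u = a1 * t1 + a2 * t2"
      by (simp add: tauc_def A T)
    define c where "c = cos v"
    define s where "s = sin v"
    have cs: "c^2 + s^2 = 1" by (simp add: c_def s_def)
    define P where "P = phic \<alpha> u"
    define R where "R = rhoc \<alpha> h u"
    define M where "M = muc \<alpha> u"
    define A where "A = ac \<alpha> u"
    define B where "B = bc \<alpha> u"
    have AB: "- A * M + B * tauc \<alpha> u = deriv (phic \<alpha>) u"
      using pp unfolding A_def B_def M_def ac_def bc_def dp
      by (simp add: field_simps power2_eq_square)
    have rot: "- (s * x1 + c * x2) * (c * w1 - s * w2) + (c * x1 - s * x2) * (s * w1 + c * w2)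
        = x1 * w2 - x2 * w1" for x1 x2 w1 w2
    proof -
      have "- (s * x1 + c * x2) * (c * w1 - s * w2) + (c * x1 - s * x2) * (s * w1 + c * w2)
          = (c^2 + s^2) * (x1 * w2 - x2 * w1)" by (simp add: algebra_simps power2_eq_square)
      then show ?thesis using cs by simp
    qed
    have W: "ac \<alpha> u *\<^sub>R Tc \<alpha> u + bc \<alpha> u *\<^sub>R Nc \<alpha> u = (A * t1 - B * t2, A * t2 + B * t1)"
      by (simp add: A_def B_def T Nc_def Jrot_def)
    have lhs: "lprod (xi_rot (Xhel \<alpha> h u v)) (etahel \<alpha> h u v) = R * (a1 * (A * t2 + B * t1) - a2 * (A * t1 - B * t2))"
    proof -
      have "lprod (xi_rot (Xhel \<alpha> h u v)) (etahel \<alpha> h u v)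
        = R * (- (s * a1 + c * a2) * (c * (A * t1 - B * t2) - s * (A * t2 + B * t1))
           + (c * a1 - s * a2) * (s * (A * t1 - B * t2) + c * (A * t2 + B * t1)))"
        unfolding lprod_def xi_rot_def Xhel_def etahel_def Let_def W
        by (simp add: erot_def A flip: c_def s_def R_def) (simp add: algebra_simps)
      then show ?thesis by (simp only: rot)
    qed
    have rhs: "lprod ((- h) *\<^sub>R dt_field) (etahel \<alpha> h u v) = R * deriv (phic \<alpha>) u"
      using assms(1) unfolding lprod_def dt_field_def etahel_def Let_def cc_def R_def by simp
    show ?thesis unfolding lhs rhs AB[symmetric] M_def mu ta
      by (simp add: algebra_simps)
  qed
  show ?thesis unfolding is_rotator_def is_translator_def key by simp
qed

end
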